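(* Let $(G^A_n)_{n\in\mathbb{N}}$ and $(G^B_n)_{n\in\mathbb{N}}$ be bi-iteratively constructible families of graphs. Then the family $(G^A_n\sqcup G^B_n)_{n\in\mathbb{N}}$ of disjoint unions is bi-iteratively constructible. If both families are iteratively constructible, then so is $(G^A_n\sqcup G^B_n)_{n\in\mathbb{N}}$.
   Context: A $k$-graph is $G=(V,E;R_1,\dots,R_k)$ where $(V,E)$ is a finite simple graph (its underlying graph) and $R_1,\dots,R_k$ (the labels, possibly empty) partition $V$. Basic operations on $k$-graphs: $Add_i$ adds a new isolated vertex to $R_i$; $\rho_{i\to j}$ moves all vertices of $R_i$ into $R_j$, leaving $R_i$ empty; $\eta_{i,j}$ adds all edges between $R_i$ and $R_j$; for $b\in\mathbb{N}$, $\eta^b_{i,j}$ acts as $\eta_{i,j}$ if $|R_i\cup R_j|\le b$ and otherwise does nothing; $\delta_{i,j}$ removes all edges between $R_i$ and $R_j$. An elementary operation is a finite composition of basic operations; $id$ is the empty composition. A sequence of $k$-graphs is an $F$-iteration family if $G_{n+1}=F(G_n)$ for all $n$ ($G_0$ a $k$-graph, $F$ elementary), and an $(H,F,L)$-bi-iteration family if $G_{n+1}=H(F^n(L(G_n)))$ for all $n$, $F^n$ denoting $n$-fold application. A sequence of graphs is (bi-)iteratively constructible if for some $k$ it is the sequence of underlying graphs of an iteration (resp. bi-iteration) family of $k$-graphs. *)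

theory Defs
  imports Main
begin

type_synonym 'a graph = "'a set \<times> 'a set set"

definition is_graph :: "'a graph \<Rightarrow> bool" where
  "is_graph G \<longleftrightarrow> finite (fst G) \<and>
     snd G \<subseteq> {{u, v} | u v. u \<in> fst G \<and> v \<in> fst G \<and> u \<noteq> v}"

definition graph_iso :: "'a graph \<Rightarrow> 'b graph \<Rightarrow> bool" where
  "graph_iso G H \<longleftrightarrow> (\<exists>f. bij_betw f (fst G) (fst H) \<and> (\<lambda>e. f ` e) ` snd G = snd H)"

definition disjoint_union :: "'a graph \<Rightarrow> 'b graph \<Rightarrow> ('a + 'b) graph" where
  "disjoint_union G H =
     (Inl ` fst G \<union> Inr ` fst H, (\<lambda>e. Inl ` e) ` snd G \<union> (\<lambda>e. Inr ` e) ` snd H)"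

record kgraph =
  kV :: "nat set"
  kE :: "nat set set"
  klab :: "nat \<Rightarrow> nat"

definition is_kgraph :: "nat \<Rightarrow> kgraph \<Rightarrow> bool" where
  "is_kgraph k G \<longleftrightarrow> is_graph (kV G, kE G) \<and> (\<forall>v \<in> kV G. klab G v \<in> {1..k})"

definition underlying :: "kgraph \<Rightarrow> nat graph" where
  "underlying G = (kV G, kE G)"

definition lclass :: "kgraph \<Rightarrow> nat \<Rightarrow> nat set" where
  "lclass G i = {v \<in> kV G. klab G v = i}"

definition edges_between :: "kgraph \<Rightarrow> nat \<Rightarrow> nat \<Rightarrow> nat set set" where
  "edges_between G i j = {{u, v} | u v. u \<in> lclass G i \<and> v \<in> lclass G j \<and> u \<noteq> v}"

datatype basic_op =
    Add nat
  | Ren nat nat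
  | Eta nat nat
  | EtaB nat nat nat
  | Del nat nat

fun apply_op :: "basic_op \<Rightarrow> kgraph \<Rightarrow> kgraph" where
  "apply_op (Add i) G =
     (let v = (LEAST x. x \<notin> kV G)
      in G\<lparr>kV := insert v (kV G), klab := (klab G)(v := i)\<rparr>)"
| "apply_op (Ren i j) G = G\<lparr>klab := (\<lambda>v. if klab G v = i then j else klab G v)\<rparr>"
| "apply_op (Eta i j) G = G\<lparr>kE := kE G \<union> edges_between G i j\<rparr>"
| "apply_op (EtaB b i j) G =
     (if card (lclass G i \<union> lclass G j) \<le> b
      then G\<lparr>kE := kE G \<union> edges_between G i j\<rparr> else G)"
| "apply_op (Del i j) G = G\<lparr>kE := kE G - edges_between G i j\<rparr>"

fun valid_op :: "nat \<Rightarrow> basic_op \<Rightarrow> bool" where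
  "valid_op k (Add i) \<longleftrightarrow> i \<in> {1..k}"
| "valid_op k (Ren i j) \<longleftrightarrow> i \<in> {1..k} \<and> j \<in> {1..k} \<and> i \<noteq> j"
| "valid_op k (Eta i j) \<longleftrightarrow> i \<in> {1..k} \<and> j \<in> {1..k} \<and> i \<noteq> j"
| "valid_op k (EtaB b i j) \<longleftrightarrow> i \<in> {1..k} \<and> j \<in> {1..k} \<and> i \<noteq> j"
| "valid_op k (Del i j) \<longleftrightarrow> i \<in> {1..k} \<and> j \<in> {1..k} \<and> i \<noteq> j"

text \<open>Elementary operations: finite compositions of basic operations, as lists
(applied left to right); the empty list is id.\<close>

type_synonym elem_op = "basic_op list"

definition valid_elem :: "nat \<Rightarrow> elem_op \<Rightarrow> bool" where
  "valid_elem k F \<longleftrightarrow> (\<forall>op \<in> set F. valid_op k op)"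

definition apply_elem :: "elem_op \<Rightarrow> kgraph \<Rightarrow> kgraph" where
  "apply_elem F G = fold apply_op F G"

definition iteration_family :: "nat \<Rightarrow> (nat \<Rightarrow> kgraph) \<Rightarrow> elem_op \<Rightarrow> bool" where
  "iteration_family k Gs F \<longleftrightarrow> is_kgraph k (Gs 0) \<and> valid_elem k F \<and>
     (\<forall>n. Gs (Suc n) = apply_elem F (Gs n))"

definition bi_iteration_family ::
    "nat \<Rightarrow> (nat \<Rightarrow> kgraph) \<Rightarrow> elem_op \<Rightarrow> elem_op \<Rightarrow> elem_op \<Rightarrow> bool" where
  "bi_iteration_family k Gs H F L \<longleftrightarrow> is_kgraph k (Gs 0) \<and>
     valid_elem k H \<and> valid_elem k F \<and> valid_elem k L \<and>
     (\<forall>n. Gs (Suc n) = apply_elem H ((apply_elem F ^^ n) (apply_elem L (Gs n))))"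

definition iteratively_constructible :: "(nat \<Rightarrow> 'a graph) \<Rightarrow> bool" where
  "iteratively_constructible Gs \<longleftrightarrow>
     (\<exists>k Ks F. iteration_family k Ks F \<and> (\<forall>n. graph_iso (underlying (Ks n)) (Gs n)))"

definition bi_iteratively_constructible :: "(nat \<Rightarrow> 'a graph) \<Rightarrow> bool" where
  "bi_iteratively_constructible Gs \<longleftrightarrow>
     (\<exists>k Ks H F L. bi_iteration_family k Ks H F L \<and>
        (\<forall>n. graph_iso (underlying (Ks n)) (Gs n)))"

end

theory Submission
  imports Defs
begin

fun shift :: "nat \<Rightarrow> basic_op \<Rightarrow> basic_op" where
  "shift s (Add i) = Add (i+s)"
| "shift s (Ren i j) = Ren (i+s) (j+s)"
| "shift s (Eta i j) = Eta (i+s) (j+s)"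
| "shift s (EtaB b i j) = EtaB b (i+s) (j+s)"
| "shift s (Del i j) = Del (i+s) (j+s)"

definition simfg where
 "simfg sa ka sb kb f g C A B \<longleftrightarrow> is_kgraph ka A \<and> is_kgraph kb B \<and> (sa + ka \<le> sb \<or> sb + kb \<le> sa) \<and>
   inj_on f (kV A) \<and> inj_on g (kV B) \<and> f ` kV A \<inter> g ` kV B = {} \<and> kV C = f ` kV A \<union> g ` kV B \<and>
   (\<forall>v\<in>kV A. klab C (f v) = klab A v + sa) \<and> (\<forall>v\<in>kV B. klab C (g v) = klab B v + sb) \<and>
   kE C = (image f) ` kE A \<union> (image g) ` kE B"

lemma simfg_sym: "simfg sa ka sb kb f g C A B \<Longrightarrow> simfg sb kb sa ka g f C B A"
  by (auto simp: simfg_def)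

lemma least_fresh: "finite (S::nat set) \<Longrightarrow> (LEAST x. x \<notin> S) \<notin> S"
  by (metis LeastI_ex ex_new_if_finite infinite_UNIV_nat)

lemma kgraph_edges: "is_kgraph k G \<Longrightarrow> e \<in> kE G \<Longrightarrow> \<exists>u v. e = {u,v} \<and> u \<in> kV G \<and> v \<in> kV G \<and> u \<noteq> v"
  by (auto simp: is_kgraph_def is_graph_def)

lemma kgraph_edges_sub: "is_kgraph k G \<Longrightarrow> e \<in> kE G \<Longrightarrow> e \<subseteq> kV G"
  using kgraph_edges by blast

lemma eb_sub: "e \<in> edges_between G i j \<Longrightarrow> \<exists>u v. e = {u,v} \<and> u \<in> kV G \<and> v \<in> kV G \<and> u \<noteq> v"
  by (auto simp: edges_between_def lclass_def)

lemma kgraph_pres: "is_kgraph k G \<Longrightarrow> valid_op k op \<Longrightarrow> is_kgraph k (apply_op op G)"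
proof (cases op)
  case (Add i)
  assume a: "is_kgraph k G" "valid_op k op"
  then show ?thesis using Add by (auto simp: is_kgraph_def is_graph_def Let_def) blast
next
  case (Ren i j)
  assume a: "is_kgraph k G" "valid_op k op"
  then show ?thesis using Ren by (auto simp: is_kgraph_def is_graph_def)
next
  case (Eta i j)
  assume a: "is_kgraph k G" "valid_op k op"
  then show ?thesis using Eta eb_sub[of _ G i j] by (auto simp: is_kgraph_def is_graph_def)
next
  case (EtaB b i j)
  assume a: "is_kgraph k G" "valid_op k op"
  then show ?thesis using EtaB eb_sub[of _ G i j] by (auto simp: is_kgraph_def is_graph_def)
next
  case (Del i j)
  assume a: "is_kgraph k G" "valid_op k op"
  then show ?thesis using Del by (auto simp: is_kgraph_def is_graph_def)
qed

lemma lclass_sim: "simfg sa ka sb kb f g C A B \<Longrightarrow> i \<in> {1..ka} \<Longrightarrow> lclass C (i+sa) = f ` lclass A i"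
  unfolding simfg_def lclass_def is_kgraph_def
  by auto

lemma pairs_image: "inj_on f V \<Longrightarrow> X \<subseteq> V \<Longrightarrow> Y \<subseteq> V \<Longrightarrow>
   {{u,v}| u v. u \<in> f`X \<and> v \<in> f`Y \<and> u\<noteq>v} = image f ` {{u,v}| u v. u\<in>X \<and> v\<in>Y \<and> u\<noteq>v}"
proof (intro equalityI subsetI)
  fix e assume "inj_on f V" "X \<subseteq> V" "Y \<subseteq> V" "e \<in> {{u,v}| u v. u \<in> f`X \<and> v \<in> f`Y \<and> u\<noteq>v}"
  then obtain a b where "a \<in> X" "b \<in> Y" "f a \<noteq> f b" "e = {f a, f b}" by blast
  then show "e \<in> image f ` {{u,v}| u v. u\<in>X \<and> v\<in>Y \<and> u\<noteq>v}"
    by (intro image_eqI[of _ _ "{a,b}"]) auto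
next
  fix e assume i: "inj_on f V" "X \<subseteq> V" "Y \<subseteq> V" "e \<in> image f ` {{u,v}| u v. u\<in>X \<and> v\<in>Y \<and> u\<noteq>v}"
  then obtain a b where ab: "a \<in> X" "b \<in> Y" "a \<noteq> b" "e = {f a, f b}" by blast
  then have "f a \<noteq> f b" using i by (meson inj_on_eq_iff subsetD)
  then show "e \<in> {{u,v}| u v. u \<in> f`X \<and> v \<in> f`Y \<and> u\<noteq>v}" using ab by blast
qed

lemma eb_sim: "simfg sa ka sb kb f g C A B \<Longrightarrow> i \<in> {1..ka} \<Longrightarrow> j \<in> {1..ka} \<Longrightarrow>
   edges_between C (i+sa) (j+sa) = image f ` edges_between A i j"
  unfolding edges_between_def lclass_sim
  by (rule pairs_image[of f "kV A"]) (auto simp: simfg_def lclass_def)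

lemma simfg_fin: "simfg sa ka sb kb f g C A B \<Longrightarrow> finite (kV C) \<and> finite (kV A) \<and> finite (kV B)"
  by (auto simp: simfg_def is_kgraph_def is_graph_def)

lemma step_sim:
  assumes S: "simfg sa ka sb kb f g C A B" and V: "valid_op ka op"
  shows "\<exists>f'. simfg sa ka sb kb f' g (apply_op (shift sa op) C) (apply_op op A) B"
proof -
  have KA: "is_kgraph ka (apply_op op A)" using S V kgraph_pres by (auto simp: simfg_def)
  have KB: "\<forall>w\<in>kV B. klab B w \<in> {1..kb}" using S by (auto simp: simfg_def is_kgraph_def)
  have R: "sa + ka \<le> sb \<or> sb + kb \<le> sa" using S by (auto simp: simfg_def)
  show ?thesis
  proof (cases op)
    case (Add i)
    define a where "a = (LEAST x. x \<notin> kV A)"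
    define c where "c = (LEAST x. x \<notin> kV C)"
    have a: "a \<notin> kV A" unfolding a_def using simfg_fin[OF S] least_fresh by blast
    have c: "c \<notin> kV C" unfolding c_def using simfg_fin[OF S] least_fresh by blast
    define f' where "f' = f(a := c)"
    have fe: "\<And>v. v \<in> kV A \<Longrightarrow> f' v = f v" unfolding f'_def using a by auto
    have im: "f' ` kV A = f ` kV A" using fe by auto
    have eA: "\<And>e. e \<in> kE A \<Longrightarrow> f' ` e = f ` e"
      using S fe kgraph_edges_sub[of ka A] unfolding simfg_def by (metis image_cong subsetD)
    have imE: "image f' ` kE A = image f ` kE A" using eA by (rule image_cong[OF refl])
    have cf: "c \<notin> f ` kV A" "c \<notin> g ` kV B" using c S by (auto simp: simfg_def)
    have inj: "inj_on f' (insert a (kV A))"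
      using S cf fe unfolding simfg_def f'_def
      by (auto simp: inj_on_def)
    have eqC: "apply_op (shift sa op) C = C\<lparr>kV := insert c (kV C), klab := (klab C)(c := i+sa)\<rparr>"
      using Add by (simp add: Let_def c_def)
    have eqA: "apply_op op A = A\<lparr>kV := insert a (kV A), klab := (klab A)(a := i)\<rparr>"
      using Add by (simp add: Let_def a_def)
    have fa: "f' a = c" unfolding f'_def by simp
    have V1: "insert c (kV C) = f' ` insert a (kV A) \<union> g ` kV B" using S im fa by (auto simp: simfg_def)
    have V2: "f' ` insert a (kV A) \<inter> g ` kV B = {}" using S im fa cf by (auto simp: simfg_def)
    have L1: "\<forall>v\<in>insert a (kV A). ((klab C)(c := i+sa)) (f' v) = ((klab A)(a := i)) v + sa"
    proof
      fix v assume v: "v \<in> insert a (kV A)"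
      show "((klab C)(c := i+sa)) (f' v) = ((klab A)(a := i)) v + sa"
      proof (cases "v = a")
        case True then show ?thesis using fa by simp
      next
        case False
        then have "v \<in> kV A" using v by simp
        then have "f' v = f v" "f v \<noteq> c" using fe cf by auto
        then show ?thesis using S False \<open>v \<in> kV A\<close> by (auto simp: simfg_def)
      qed
    qed
    have L2: "\<forall>v\<in>kV B. ((klab C)(c := i+sa)) (g v) = klab B v + sb"
      using S cf by (auto simp: simfg_def)
    have "simfg sa ka sb kb f' g (apply_op (shift sa op) C) (apply_op op A) B"
      unfolding eqC eqA simfg_def kgraph.simps
      apply (intro conjI)
      using KA[unfolded eqA] S inj imE V1 V2 L1 L2 apply (simp_all add: simfg_def)
      done
    then show ?thesis by blast
  next
    case (Ren i j)
    have "simfg sa ka sb kb f g (apply_op (shift sa op) C) (apply_op op A) B"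
      using KA S KB R V unfolding simfg_def by (auto simp: Ren)
    then show ?thesis by blast
  next
    case (Eta i j)
    have eb: "edges_between C (i+sa) (j+sa) = image f ` edges_between A i j"
      using eb_sim[OF S] V Eta by auto
    have "simfg sa ka sb kb f g (apply_op (shift sa op) C) (apply_op op A) B"
      using KA S eb unfolding simfg_def by (auto simp: Eta)
    then show ?thesis by blast
  next
    case (EtaB b i j)
    have eb: "edges_between C (i+sa) (j+sa) = image f ` edges_between A i j"
      using eb_sim[OF S] V EtaB by auto
    have "lclass C (i+sa) \<union> lclass C (j+sa) = f ` (lclass A i \<union> lclass A j)"
      using lclass_sim[OF S] V EtaB by auto
    moreover have "inj_on f (lclass A i \<union> lclass A j)"
      using S by (auto simp: simfg_def lclass_def intro: inj_on_subset)
    ultimately have cd: "card (lclass C (i+sa) \<union> lclass C (j+sa)) = card (lclass A i \<union> lclass A j)"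
      by (simp add: card_image)
    have "simfg sa ka sb kb f g (apply_op (shift sa op) C) (apply_op op A) B"
      using KA S eb cd unfolding simfg_def by (auto simp: EtaB)
    then show ?thesis by blast
  next
    case (Del i j)
    have eb: "edges_between C (i+sa) (j+sa) = image f ` edges_between A i j"
      using eb_sim[OF S] V Del by auto
    have injP: "inj_on (image f) (Pow (kV A))" using S by (auto simp: simfg_def intro: inj_on_image_Pow)
    have sub1: "kE A \<subseteq> Pow (kV A)" using S kgraph_edges_sub[of ka A] by (auto simp: simfg_def)
    have sub2: "edges_between A i j \<subseteq> Pow (kV A)" using eb_sub[of _ A i j] by blast
    have d1: "image f ` (kE A - edges_between A i j) = image f ` kE A - image f ` edges_between A i j"
      by (rule inj_on_image_set_diff[OF injP]) (use sub1 sub2 in auto)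
    have d2: "image g ` kE B \<inter> image f ` edges_between A i j = {}"
    proof (rule ccontr)
      assume "image g ` kE B \<inter> image f ` edges_between A i j \<noteq> {}"
      then obtain e e' where e: "e \<in> kE B" "e' \<in> edges_between A i j" "g ` e = f ` e'" by blast
      then obtain u v where "e' = {u,v}" "u \<in> kV A" using eb_sub[OF e(2)] by blast
      moreover have "e \<subseteq> kV B" using e S kgraph_edges_sub[of kb B] by (auto simp: simfg_def)
      ultimately have "f u \<in> f ` kV A \<inter> g ` kV B" using e(3) by blast
      then show False using S by (auto simp: simfg_def)
    qed
    have "kE C - edges_between C (i+sa) (j+sa) = image f ` (kE A - edges_between A i j) \<union> image g ` kE B"
    proof -
      have kEC: "kE C = image f ` kE A \<union> image g ` kE B" using S by (simp add: simfg_def)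
      show ?thesis unfolding kEC eb d1 using d2 by blast
    qed
    then have "simfg sa ka sb kb f g (apply_op (shift sa op) C) (apply_op op A) B"
      using KA S unfolding simfg_def by (auto simp: Del)
    then show ?thesis by blast
  qed
qed

lemma apply_elem_Cons: "apply_elem (x#xs) G = apply_elem xs (apply_op x G)"
  by (simp add: apply_elem_def)

lemma apply_elem_append: "apply_elem (xs@ys) G = apply_elem ys (apply_elem xs G)"
  by (simp add: apply_elem_def)

lemma elem_simfg:
  "simfg sa ka sb kb f g C A B \<Longrightarrow> valid_elem ka F \<Longrightarrow>
   \<exists>f'. simfg sa ka sb kb f' g (apply_elem (map (shift sa) F) C) (apply_elem F A) B"
proof (induction F arbitrary: f C A)
  case Nil then show ?case by (auto simp: apply_elem_def)
next
  case (Cons x xs)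
  obtain f' where "simfg sa ka sb kb f' g (apply_op (shift sa x) C) (apply_op x A) B"
    using step_sim[OF Cons.prems(1)] Cons.prems(2) by (auto simp: valid_elem_def)
  moreover have "valid_elem ka xs" using Cons.prems(2) by (auto simp: valid_elem_def)
  ultimately show ?case using Cons.IH by (simp add: apply_elem_Cons)
qed

definition sim where "sim sa ka sb kb C A B \<longleftrightarrow> (\<exists>f g. simfg sa ka sb kb f g C A B)"

lemma elem_simA: "sim sa ka sb kb C A B \<Longrightarrow> valid_elem ka F \<Longrightarrow>
   sim sa ka sb kb (apply_elem (map (shift sa) F) C) (apply_elem F A) B"
  unfolding sim_def using elem_simfg by blast

lemma elem_simB: "sim sa ka sb kb C A B \<Longrightarrow> valid_elem kb F \<Longrightarrow>
   sim sa ka sb kb (apply_elem (map (shift sb) F) C) A (apply_elem F B)"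
proof -
  assume "sim sa ka sb kb C A B" "valid_elem kb F"
  then obtain f g where "simfg sb kb sa ka g f C B A" unfolding sim_def using simfg_sym by blast
  then obtain g' where "simfg sb kb sa ka g' f (apply_elem (map (shift sb) F) C) (apply_elem F B) A"
    using elem_simfg \<open>valid_elem kb F\<close> by blast
  then show ?thesis unfolding sim_def using simfg_sym by blast
qed

definition comb where "comb sa sb FA FB = map (shift sa) FA @ map (shift sb) FB"

lemma comb_sim: "sim sa ka sb kb C A B \<Longrightarrow> valid_elem ka FA \<Longrightarrow> valid_elem kb FB \<Longrightarrow>
   sim sa ka sb kb (apply_elem (comb sa sb FA FB) C) (apply_elem FA A) (apply_elem FB B)"
  unfolding comb_def apply_elem_append using elem_simA elem_simB by blast

lemma pow_sim: "sim sa ka sb kb C A B \<Longrightarrow> valid_elem ka FA \<Longrightarrow> valid_elem kb FB \<Longrightarrow>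
   sim sa ka sb kb ((apply_elem (comb sa sb FA FB) ^^ n) C) ((apply_elem FA ^^ n) A) ((apply_elem FB ^^ n) B)"
  by (induction n) (auto intro: comb_sim)

lemma valid_comb: "valid_elem k FA \<Longrightarrow> valid_elem m FB \<Longrightarrow> valid_elem (k+m) (comb 0 k FA FB)"
proof -
  have a: "valid_op k op \<Longrightarrow> valid_op (k+m) (shift 0 op)" for op by (cases op) auto
  have b: "valid_op m op \<Longrightarrow> valid_op (k+m) (shift k op)" for op by (cases op) auto
  show "valid_elem k FA \<Longrightarrow> valid_elem m FB \<Longrightarrow> valid_elem (k+m) (comb 0 k FA FB)"
    using a b by (auto simp: valid_elem_def comb_def)
qed

definition init :: "nat \<Rightarrow> kgraph \<Rightarrow> kgraph \<Rightarrow> kgraph" where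
  "init k A B = \<lparr>kV = (\<lambda>v. 2*v) ` kV A \<union> (\<lambda>v. 2*v+1) ` kV B,
     kE = image (\<lambda>v. 2*v) ` kE A \<union> image (\<lambda>v. 2*v+1) ` kE B,
     klab = (\<lambda>x. if even x then klab A (x div 2) else klab B (x div 2) + k)\<rparr>"

lemma init_sim: "is_kgraph k A \<Longrightarrow> is_kgraph m B \<Longrightarrow> sim 0 k k m (init k A B) A B"
  unfolding sim_def
  apply (rule exI[of _ "\<lambda>v. 2*v"], rule exI[of _ "\<lambda>v. 2*v+1"])
  unfolding simfg_def
  apply (intro conjI)
  apply (simp_all add: init_def inj_on_def)
  apply (auto)
  apply presburger
  done

lemma init_kgraph: "is_kgraph k A \<Longrightarrow> is_kgraph m B \<Longrightarrow> is_kgraph (k+m) (init k A B)"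
proof -
  assume KA: "is_kgraph k A" and KB: "is_kgraph m B"
  have fin: "finite (kV (init k A B))" using KA KB by (simp add: init_def is_kgraph_def is_graph_def)
  have ed: "kE (init k A B) \<subseteq> {{u, v} | u v. u \<in> kV (init k A B) \<and> v \<in> kV (init k A B) \<and> u \<noteq> v}"
  proof
    fix e assume "e \<in> kE (init k A B)"
    then consider (a) e' where "e' \<in> kE A" "e = (\<lambda>v. 2*v) ` e'" | (b) e' where "e' \<in> kE B" "e = (\<lambda>v. 2*v+1) ` e'"
      by (auto simp: init_def)
    then show "e \<in> {{u, v} | u v. u \<in> kV (init k A B) \<and> v \<in> kV (init k A B) \<and> u \<noteq> v}"
    proof cases
      case a
      then obtain u v where uv: "e' = {u,v}" "u \<in> kV A" "v \<in> kV A" "u \<noteq> v" using kgraph_edges[OF KA] by blast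
      have "e = {2*u, 2*v}" using uv a by simp
      moreover have "2*u \<in> kV (init k A B)" "2*v \<in> kV (init k A B)" using uv by (auto simp: init_def)
      moreover have "2*u \<noteq> 2*v" using uv by simp
      ultimately show ?thesis by blast
    next
      case b
      then obtain u v where uv: "e' = {u,v}" "u \<in> kV B" "v \<in> kV B" "u \<noteq> v" using kgraph_edges[OF KB] by blast
      have "e = {2*u+1, 2*v+1}" using uv b by simp
      moreover have "2*u+1 \<in> kV (init k A B)" "2*v+1 \<in> kV (init k A B)" using uv by (auto simp: init_def)
      moreover have "2*u+1 \<noteq> 2*v+1" using uv by simp
      ultimately show ?thesis by blast
    qed
  qed
  have lab: "\<forall>v\<in>kV (init k A B). klab (init k A B) v \<in> {1..k+m}"
    using KA KB by (auto simp: init_def is_kgraph_def)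
  show ?thesis using fin ed lab by (simp add: is_kgraph_def is_graph_def)
qed

lemma sim_iso:
  assumes S: "simfg sa ka sb kb f g C A B"
    and IA: "graph_iso (underlying A) GA" and IB: "graph_iso (underlying B) GB"
  shows "graph_iso (underlying C) (disjoint_union GA GB)"
proof -
  obtain \<phi> where p: "bij_betw \<phi> (kV A) (fst GA)" "image \<phi> ` kE A = snd GA"
    using IA by (auto simp: graph_iso_def underlying_def)
  obtain \<psi> where q: "bij_betw \<psi> (kV B) (fst GB)" "image \<psi> ` kE B = snd GB"
    using IB by (auto simp: graph_iso_def underlying_def)
  define h where "h x = (if x \<in> f ` kV A then Inl (\<phi> (inv_into (kV A) f x)) else Inr (\<psi> (inv_into (kV B) g x)))" for x
  have injf: "inj_on f (kV A)" and injg: "inj_on g (kV B)" and dj: "f ` kV A \<inter> g ` kV B = {}"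
    and VC: "kV C = f ` kV A \<union> g ` kV B" and EC: "kE C = image f ` kE A \<union> image g ` kE B"
    and KA: "is_kgraph ka A" and KB: "is_kgraph kb B"
    using S by (auto simp: simfg_def)
  have hf: "\<And>v. v \<in> kV A \<Longrightarrow> h (f v) = Inl (\<phi> v)" unfolding h_def using injf by auto
  have hg: "\<And>w. w \<in> kV B \<Longrightarrow> h (g w) = Inr (\<psi> w)" unfolding h_def using injg dj by auto
  have injp: "inj_on \<phi> (kV A)" and injq: "inj_on \<psi> (kV B)" using p q by (auto simp: bij_betw_def)
  have im: "h ` kV C = Inl ` fst GA \<union> Inr ` fst GB"
  proof -
    have "h ` kV C = h ` f ` kV A \<union> h ` g ` kV B" using VC by auto
    also have "h ` f ` kV A = Inl ` \<phi> ` kV A" using hf by (auto simp: image_image intro!: image_cong)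
    also have "h ` g ` kV B = Inr ` \<psi> ` kV B" using hg by (auto simp: image_image intro!: image_cong)
    finally show ?thesis using p q by (simp add: bij_betw_def)
  qed
  have inj: "inj_on h (kV C)"
  proof (rule inj_onI)
    fix x y assume x: "x \<in> kV C" and y: "y \<in> kV C" and e: "h x = h y"
    show "x = y"
    proof (cases "x \<in> f ` kV A")
      case True
      then obtain v where v: "v \<in> kV A" "x = f v" by auto
      show ?thesis
      proof (cases "y \<in> f ` kV A")
        case True
        then obtain v' where v': "v' \<in> kV A" "y = f v'" by auto
        then show ?thesis using e v hf injp by (auto simp: inj_on_def)
      next
        case False
        then obtain w where "w \<in> kV B" "y = g w" using y VC by auto
        then show ?thesis using e v hf hg by auto
      qed
    next
      case False
      then obtain w where w: "w \<in> kV B" "x = g w" using x VC by auto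
      show ?thesis
      proof (cases "y \<in> f ` kV A")
        case True
        then obtain v' where v': "v' \<in> kV A" "y = f v'" by auto
        then show ?thesis using e w hf hg by auto
      next
        case False
        then obtain w' where "w' \<in> kV B" "y = g w'" using y VC by auto
        then show ?thesis using e w hg injq by (auto simp: inj_on_def)
      qed
    qed
  qed
  have eA: "\<And>e. e \<in> kE A \<Longrightarrow> h ` f ` e = Inl ` \<phi> ` e"
  proof -
    fix e assume "e \<in> kE A"
    then have "e \<subseteq> kV A" using kgraph_edges_sub[OF KA] by blast
    then show "h ` f ` e = Inl ` \<phi> ` e" using hf by (auto simp: image_image intro!: image_cong)
  qed
  have eB: "\<And>e. e \<in> kE B \<Longrightarrow> h ` g ` e = Inr ` \<psi> ` e"
  proof -
    fix e assume "e \<in> kE B"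
    then have "e \<subseteq> kV B" using kgraph_edges_sub[OF KB] by blast
    then show "h ` g ` e = Inr ` \<psi> ` e" using hg by (auto simp: image_image intro!: image_cong)
  qed
  have E1: "image h ` image f ` kE A = image Inl ` snd GA"
  proof -
    have "image h ` image f ` kE A = (\<lambda>e. h ` f ` e) ` kE A"
      by (rule image_image)
    also have "\<dots> = (\<lambda>e. Inl ` \<phi> ` e) ` kE A" by (rule image_cong[OF refl eA])
    also have "\<dots> = image Inl ` image \<phi> ` kE A" by (rule image_image[symmetric])
    finally show ?thesis using p by simp
  qed
  have E2: "image h ` image g ` kE B = image Inr ` snd GB"
  proof -
    have "image h ` image g ` kE B = (\<lambda>e. h ` g ` e) ` kE B"
      by (rule image_image)
    also have "\<dots> = (\<lambda>e. Inr ` \<psi> ` e) ` kE B" by (rule image_cong[OF refl eB])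
    also have "\<dots> = image Inr ` image \<psi> ` kE B" by (rule image_image[symmetric])
    finally show ?thesis using q by simp
  qed
  have "image h ` kE C = image Inl ` snd GA \<union> image Inr ` snd GB"
    unfolding EC image_Un E1 E2 ..
  then show ?thesis unfolding graph_iso_def underlying_def disjoint_union_def
    using inj im by (auto simp: bij_betw_def)
qed

fun bseq :: "kgraph \<Rightarrow> elem_op \<Rightarrow> elem_op \<Rightarrow> elem_op \<Rightarrow> nat \<Rightarrow> kgraph" where
  "bseq C0 H F L 0 = C0"
| "bseq C0 H F L (Suc n) = apply_elem H ((apply_elem F ^^ n) (apply_elem L (bseq C0 H F L n)))"

lemma sim_iso': "sim sa ka sb kb C A B \<Longrightarrow> graph_iso (underlying A) GA \<Longrightarrow> graph_iso (underlying B) GB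
  \<Longrightarrow> graph_iso (underlying C) (disjoint_union GA GB)"
  unfolding sim_def using sim_iso by blast

theorem mainTheorem11:
  fixes GA :: "nat \<Rightarrow> 'a graph" and GB :: "nat \<Rightarrow> 'b graph"
  shows "(bi_iteratively_constructible GA \<and> bi_iteratively_constructible GB \<longrightarrow>
            bi_iteratively_constructible (\<lambda>n. disjoint_union (GA n) (GB n))) \<and>
         (iteratively_constructible GA \<and> iteratively_constructible GB \<longrightarrow>
            iteratively_constructible (\<lambda>n. disjoint_union (GA n) (GB n)))"
proof (intro conjI impI)
  assume "bi_iteratively_constructible GA \<and> bi_iteratively_constructible GB"
  then obtain k KA HA FA LA m KB HB FB LB where
    fa: "bi_iteration_family k KA HA FA LA" and ia: "\<forall>n. graph_iso (underlying (KA n)) (GA n)" and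
    fb: "bi_iteration_family m KB HB FB LB" and ib: "\<forall>n. graph_iso (underlying (KB n)) (GB n)"
    unfolding bi_iteratively_constructible_def by blast
  define C0 where "C0 = init k (KA 0) (KB 0)"
  define H where "H = comb 0 k HA HB"
  define F where "F = comb 0 k FA FB"
  define L where "L = comb 0 k LA LB"
  define Ks where "Ks = bseq C0 H F L"
  have va: "valid_elem k HA" "valid_elem k FA" "valid_elem k LA" "is_kgraph k (KA 0)"
    and vb: "valid_elem m HB" "valid_elem m FB" "valid_elem m LB" "is_kgraph m (KB 0)"
    using fa fb by (auto simp: bi_iteration_family_def)
  have inv: "sim 0 k k m (Ks n) (KA n) (KB n)" for n
  proof (induction n)
    case 0 then show ?case unfolding Ks_def C0_def using init_sim va vb by simp
  next
    case (Suc n)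
    have "sim 0 k k m (apply_elem L (Ks n)) (apply_elem LA (KA n)) (apply_elem LB (KB n))"
      unfolding L_def using comb_sim Suc va vb by blast
    then have "sim 0 k k m ((apply_elem F ^^ n) (apply_elem L (Ks n))) ((apply_elem FA ^^ n) (apply_elem LA (KA n)))
        ((apply_elem FB ^^ n) (apply_elem LB (KB n)))"
      unfolding F_def using pow_sim va vb by blast
    then have "sim 0 k k m (apply_elem H ((apply_elem F ^^ n) (apply_elem L (Ks n))))
        (apply_elem HA ((apply_elem FA ^^ n) (apply_elem LA (KA n))))
        (apply_elem HB ((apply_elem FB ^^ n) (apply_elem LB (KB n))))"
      unfolding H_def using comb_sim va vb by blast
    then show ?case using fa fb unfolding Ks_def by (simp add: bi_iteration_family_def)
  qed
  have "bi_iteration_family (k+m) Ks H F L"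
    unfolding bi_iteration_family_def H_def F_def L_def
    using init_kgraph va vb valid_comb by (simp add: Ks_def C0_def H_def F_def L_def)
  moreover have "\<forall>n. graph_iso (underlying (Ks n)) (disjoint_union (GA n) (GB n))"
    using inv sim_iso' ia ib by blast
  ultimately show "bi_iteratively_constructible (\<lambda>n. disjoint_union (GA n) (GB n))"
    unfolding bi_iteratively_constructible_def by blast
next
  assume "iteratively_constructible GA \<and> iteratively_constructible GB"
  then obtain k KA FA m KB FB where
    fa: "iteration_family k KA FA" and ia: "\<forall>n. graph_iso (underlying (KA n)) (GA n)" and
    fb: "iteration_family m KB FB" and ib: "\<forall>n. graph_iso (underlying (KB n)) (GB n)"
    unfolding iteratively_constructible_def by blast
  define C0 where "C0 = init k (KA 0) (KB 0)"
  define F where "F = comb 0 k FA FB"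
  define Ks where "Ks n = (apply_elem F ^^ n) C0" for n
  have va: "valid_elem k FA" "is_kgraph k (KA 0)"
    and vb: "valid_elem m FB" "is_kgraph m (KB 0)"
    using fa fb by (auto simp: iteration_family_def)
  have ka: "KA n = (apply_elem FA ^^ n) (KA 0)" for n
    using fa by (induction n) (auto simp: iteration_family_def)
  have kb: "KB n = (apply_elem FB ^^ n) (KB 0)" for n
    using fb by (induction n) (auto simp: iteration_family_def)
  have inv: "sim 0 k k m (Ks n) (KA n) (KB n)" for n
  proof -
    have "sim 0 k k m ((apply_elem F ^^ n) C0) ((apply_elem FA ^^ n) (KA 0)) ((apply_elem FB ^^ n) (KB 0))"
      unfolding C0_def F_def using pow_sim[OF init_sim[OF va(2) vb(2)] va(1) vb(1)] by blast
    then show ?thesis by (simp only: Ks_def ka[of n] kb[of n])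
  qed
  have "iteration_family (k+m) Ks F"
    unfolding iteration_family_def
    using init_kgraph va vb valid_comb by (simp add: Ks_def C0_def F_def)
  moreover have "\<forall>n. graph_iso (underlying (Ks n)) (disjoint_union (GA n) (GB n))"
    using inv sim_iso' ia ib by blast
  ultimately show "iteratively_constructible (\<lambda>n. disjoint_union (GA n) (GB n))"
    unfolding iteratively_constructible_def by blast
qed

end
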